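(* Let $(\mathcal{A}_\Lambda,\partial_\Lambda)$ and $(\mathcal{A}'_\Lambda,\partial'_\Lambda)$ be filtered Chekanov–Eliashberg DGAs generated by $q_1,\dots,q_n$ and $q_1',\dots,q_n'$ with height filtrations $h,h'$. Let $\bar\phi:(\mathcal{A}_\Lambda,\partial_\Lambda)\to(\mathcal{A}_\Lambda,\partial_\Lambda)$ be a composition of semimonotonic elementary automorphisms, and let $\sigma:\mathcal{A}_\Lambda\to\mathcal{A}'_\Lambda$, $\sigma(q_i)=q_i'$, be a DGA isomorphism such that $\delta\ge\max_i|h'(\sigma(q_i))-h(q_i)|$. Let $\epsilon$ be an augmentation of $\mathcal{A}_\Lambda$ and $\epsilon'=\epsilon\circ\phi^{-1}$. Then $\phi=\sigma\circ\bar\phi$ induces a $2\delta$-interleaving \[ (\phi_1^{\epsilon,\bullet})_\ast: F^\bullet\mathrm{LCH}^\epsilon_\ast(\Lambda)\to F^{\bullet+\delta}\mathrm{LCH}^{\epsilon'}_\ast(\Lambda'). \]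
   Context: A filtered Chekanov–Eliashberg DGA is a Chekanov–Eliashberg DGA (free noncommutative graded algebra over $\mathbb{Z}_2$ on generators, with differential) together with heights $h(q_i)>0$, extended by $h(\text{word})=$ sum of letter heights and $h(\text{sum})=$ max, such that the differential strictly decreases height. An augmentation is an algebra map to $\mathbb{Z}_2$ vanishing in nonzero degrees and killing the image of the differential; $\partial_1^\epsilon$ is the linearized differential on the vector space spanned by the generators. $F^\bullet\mathrm{LCH}^\epsilon_\ast(\Lambda)$ is the persistence module $t\mapsto H_\ast(A^t,\partial_1^\epsilon)$, where $A^t$ is spanned by generators of height $\le t$, with transfer maps induced by inclusion. An elementary automorphism is a chain map $q_j\mapsto q_j+u$, $q_i\mapsto q_i$ ($i\ne j$), $u$ not involving $q_j$; it is semimonotonic if $u$ is a (sum of) word(s) in generators of height strictly less than $h(q_j)$. A $2\delta$-interleaving of persistence modules $U^\bullet,V^\bullet$ consists of maps $\varphi^t:U^t\to V^{t+\delta}$, $\psi^t:V^t\to U^{t+\delta}$ commuting with transfer maps, with $\psi^{t+\delta}\varphi^t$ and $\varphi^{t+\delta}\psi^t$ equal to the transfer maps from $t$ to $t+2\delta$. *)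

theory Defs
  imports Complex_Main
begin

(* Free noncommutative algebra over Z_2 on generators q_0,...,q_{n-1} (indices < n).
   A word is a list of generator indices; an element is a finite set of words
   (Z_2 coefficients, so addition is symmetric difference). *)

type_synonym word = "nat list"
type_synonym elt = "word set"

definition zadd :: "'a set \<Rightarrow> 'a set \<Rightarrow> 'a set" where
  "zadd A B = (A - B) \<union> (B - A)"

definition zsum :: "'i set \<Rightarrow> ('i \<Rightarrow> 'a set) \<Rightarrow> 'a set" where
  "zsum I X = {y. odd (card {i \<in> I. y \<in> X i})}"

definition mult :: "elt \<Rightarrow> elt \<Rightarrow> elt" where
  "mult A B = zsum (A \<times> B) (\<lambda>(u, v). {u @ v})"

(* algebra map determined by images of the generators *)
fun word_eval :: "(nat \<Rightarrow> elt) \<Rightarrow> word \<Rightarrow> elt" where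
  "word_eval f [] = {[]}"
| "word_eval f (x # w) = mult (f x) (word_eval f w)"

definition eval :: "(nat \<Rightarrow> elt) \<Rightarrow> elt \<Rightarrow> elt" where
  "eval f A = zsum A (word_eval f)"

(* derivation (Leibniz rule, signs irrelevant over Z_2) determined by values on generators *)
fun dword :: "(nat \<Rightarrow> elt) \<Rightarrow> word \<Rightarrow> elt" where
  "dword d [] = {}"
| "dword d (x # w) = zadd (mult (d x) {w}) (mult {[x]} (dword d w))"

definition dext :: "(nat \<Rightarrow> elt) \<Rightarrow> elt \<Rightarrow> elt" where
  "dext d A = zsum A (dword d)"

definition wdeg :: "(nat \<Rightarrow> int) \<Rightarrow> word \<Rightarrow> int" where
  "wdeg g w = sum_list (map g w)"

definition wht :: "(nat \<Rightarrow> real) \<Rightarrow> word \<Rightarrow> real" where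
  "wht h w = sum_list (map h w)"

(* filtered Chekanov-Eliashberg DGA on generators 0..n-1 with grading g, height h,
   differential d (given on generators) *)
definition filtered_ce_dga :: "nat \<Rightarrow> (nat \<Rightarrow> int) \<Rightarrow> (nat \<Rightarrow> real) \<Rightarrow> (nat \<Rightarrow> elt) \<Rightarrow> bool" where
  "filtered_ce_dga n g h d \<longleftrightarrow>
     (\<forall>i<n. h i > 0) \<and>
     (\<forall>i<n. finite (d i) \<and>
        (\<forall>w\<in>d i. set w \<subseteq> {..<n} \<and> wdeg g w = g i - 1 \<and> wht h w < h i)) \<and>
     (\<forall>i<n. dext d (d i) = {})"

definition dga_map :: "nat \<Rightarrow> (nat \<Rightarrow> int) \<Rightarrow> (nat \<Rightarrow> elt) \<Rightarrow> (nat \<Rightarrow> int) \<Rightarrow> (nat \<Rightarrow> elt)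
    \<Rightarrow> (nat \<Rightarrow> elt) \<Rightarrow> bool" where
  "dga_map n g d g' d' f \<longleftrightarrow>
     (\<forall>i<n. finite (f i) \<and> (\<forall>w\<in>f i. set w \<subseteq> {..<n} \<and> wdeg g' w = g i) \<and>
        dext d' (f i) = eval f (d i))"

definition gen :: "nat \<Rightarrow> elt" where
  "gen i = {[i]}"

definition comp :: "(nat \<Rightarrow> elt) \<Rightarrow> (nat \<Rightarrow> elt) \<Rightarrow> nat \<Rightarrow> elt" where
  "comp f g = (\<lambda>i. eval f (g i))"

definition elem_map :: "nat \<Rightarrow> elt \<Rightarrow> nat \<Rightarrow> elt" where
  "elem_map j u = (\<lambda>i. if i = j then zadd {[j]} u else {[i]})"

definition elem_aut :: "nat \<Rightarrow> (nat \<Rightarrow> int) \<Rightarrow> (nat \<Rightarrow> elt) \<Rightarrow> nat \<Rightarrow> elt \<Rightarrow> bool" where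
  "elem_aut n g d j u \<longleftrightarrow>
     j < n \<and> finite u \<and> (\<forall>w\<in>u. set w \<subseteq> {..<n} - {j}) \<and>
     dga_map n g d g d (elem_map j u)"

definition semimonotonic :: "(nat \<Rightarrow> real) \<Rightarrow> nat \<Rightarrow> elt \<Rightarrow> bool" where
  "semimonotonic h j u \<longleftrightarrow> (\<forall>w\<in>u. \<forall>x\<in>set w. h x < h j)"

definition compose_elem :: "(nat \<times> elt) list \<Rightarrow> nat \<Rightarrow> elt" where
  "compose_elem fs = foldr (\<lambda>(j, u) acc. comp (elem_map j u) acc) fs gen"

(* augmentation given by its values on generators (True = 1) *)
definition aug :: "(nat \<Rightarrow> bool) \<Rightarrow> elt \<Rightarrow> bool" where
  "aug e A = odd (card {w \<in> A. \<forall>x\<in>set w. e x})"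

definition augmentation :: "nat \<Rightarrow> (nat \<Rightarrow> int) \<Rightarrow> (nat \<Rightarrow> elt) \<Rightarrow> (nat \<Rightarrow> bool) \<Rightarrow> bool" where
  "augmentation n g d e \<longleftrightarrow> (\<forall>i<n. e i \<longrightarrow> g i = 0) \<and> (\<forall>i<n. \<not> aug e (d i))"

(* linear part after conjugation by the augmentation: for a word w,
   sum over positions j of (prod_{l<>j} e(w_l)) w_j *)
definition lin_word :: "(nat \<Rightarrow> bool) \<Rightarrow> word \<Rightarrow> nat set" where
  "lin_word e w = zsum {j. j < length w}
      (\<lambda>j. if (\<forall>l<length w. l \<noteq> j \<longrightarrow> e (w ! l)) then {w ! j} else {})"

definition lin :: "(nat \<Rightarrow> bool) \<Rightarrow> elt \<Rightarrow> nat set" where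
  "lin e A = zsum A (lin_word e)"

(* Z_2-linear extension of a map on generators; vectors = finite sets of generators *)
definition linext :: "(nat \<Rightarrow> nat set) \<Rightarrow> nat set \<Rightarrow> nat set" where
  "linext f V = zsum V f"

definition lin_diff :: "(nat \<Rightarrow> elt) \<Rightarrow> (nat \<Rightarrow> bool) \<Rightarrow> nat set \<Rightarrow> nat set" where
  "lin_diff d e = linext (\<lambda>i. lin e (d i))"

(* linearized map \<phi>_1^\<epsilon> of an algebra map \<phi> w.r.t. target augmentation e' = \<epsilon> \<circ> \<phi>^{-1} *)
definition lin_map :: "(nat \<Rightarrow> elt) \<Rightarrow> (nat \<Rightarrow> bool) \<Rightarrow> nat set \<Rightarrow> nat set" where
  "lin_map f e' = linext (\<lambda>i. lin e' (f i))"

definition filt :: "nat \<Rightarrow> (nat \<Rightarrow> real) \<Rightarrow> real \<Rightarrow> nat set set" where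
  "filt n h t = {V. V \<subseteq> {i. i < n \<and> h i \<le> t}}"

definition homog :: "(nat \<Rightarrow> int) \<Rightarrow> int \<Rightarrow> nat set \<Rightarrow> bool" where
  "homog g k V \<longleftrightarrow> (\<forall>i\<in>V. g i = k)"

definition cyc :: "(nat set \<Rightarrow> nat set) \<Rightarrow> nat \<Rightarrow> (nat \<Rightarrow> real) \<Rightarrow> (nat \<Rightarrow> int)
    \<Rightarrow> real \<Rightarrow> int \<Rightarrow> nat set set" where
  "cyc D n h g t k = {V \<in> filt n h t. homog g k V \<and> D V = {}}"

definition bdy :: "(nat set \<Rightarrow> nat set) \<Rightarrow> nat \<Rightarrow> (nat \<Rightarrow> real) \<Rightarrow> (nat \<Rightarrow> int)
    \<Rightarrow> real \<Rightarrow> int \<Rightarrow> nat set set" where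
  "bdy D n h g t k = {D W | W. W \<in> filt n h t \<and> homog g (k + 1) W}"

(* Homology maps are represented at the level of cycles modulo boundaries:
   \<phi>^t = [F] : H_k(A^t) -> H_k(A'^{t+\<delta>}), and \<psi>^t is represented by \<Psi> t on cycles. *)
definition induces_interleaving ::
  "nat \<Rightarrow> (nat \<Rightarrow> int) \<Rightarrow> (nat \<Rightarrow> real) \<Rightarrow> (nat set \<Rightarrow> nat set)
   \<Rightarrow> (nat \<Rightarrow> int) \<Rightarrow> (nat \<Rightarrow> real) \<Rightarrow> (nat set \<Rightarrow> nat set)
   \<Rightarrow> real \<Rightarrow> (nat set \<Rightarrow> nat set) \<Rightarrow> bool" where
  "induces_interleaving n g h D g' h' D' \<delta> F \<longleftrightarrow>
     \<comment> \<open>F induces well-defined maps \<phi>^t on homology (they commute with transfer maps automatically)\<close>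
     (\<forall>V W. F (zadd V W) = zadd (F V) (F W)) \<and>
     (\<forall>t k. \<forall>z\<in>cyc D n h g t k. F z \<in> cyc D' n h' g' (t + \<delta>) k) \<and>
     (\<forall>t k. \<forall>z\<in>bdy D n h g t k. F z \<in> bdy D' n h' g' (t + \<delta>) k) \<and>
     \<comment> \<open>existence of \<psi>^t : H_k(A'^t) -> H_k(A^{t+\<delta>}) with the interleaving identities\<close>
     (\<exists>\<Psi> :: real \<Rightarrow> nat set \<Rightarrow> nat set.
        (\<forall>t k. \<forall>z\<in>cyc D' n h' g' t k. \<Psi> t z \<in> cyc D n h g (t + \<delta>) k) \<and>
        (\<forall>t k. \<forall>z\<in>cyc D' n h' g' t k. \<forall>w\<in>cyc D' n h' g' t k.
            \<Psi> t (zadd z w) = zadd (\<Psi> t z) (\<Psi> t w)) \<and>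
        (\<forall>t k. \<forall>z\<in>bdy D' n h' g' t k. \<Psi> t z \<in> bdy D n h g (t + \<delta>) k) \<and>
        (\<forall>t s k. t \<le> s \<longrightarrow> (\<forall>z\<in>cyc D' n h' g' t k.
            zadd (\<Psi> s z) (\<Psi> t z) \<in> bdy D n h g (s + \<delta>) k)) \<and>
        (\<forall>t k. \<forall>z\<in>cyc D n h g t k.
            zadd (\<Psi> (t + \<delta>) (F z)) z \<in> bdy D n h g (t + 2 * \<delta>) k) \<and>
        (\<forall>t k. \<forall>z\<in>cyc D' n h' g' t k.
            zadd (F (\<Psi> t z)) z \<in> bdy D' n h' g' (t + 2 * \<delta>) k))"

end

theory Submission
  imports Defs "HOL-Library.Z2"
begin


declare sum_of_bool_eq[simp del] sum_of_bool_mult_eq[simp del] sum_mult_of_bool_eq[simp del]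

abbreviation bt :: "bool \<Rightarrow> bit" where "bt b \<equiv> of_bool b"

lemma of_nat_bit: "(of_nat k :: bit) = of_bool (odd k)"
  by (induction k) auto

lemma sum_bt_card: "finite A \<Longrightarrow> (\<Sum>x\<in>A. bt (P x)) = bt (odd (card {x\<in>A. P x}))"
proof -
  assume "finite A"
  then have "(\<Sum>x\<in>A. bt (P x)) = of_nat (card (A \<inter> {x. P x}))" by (rule sum_of_bool_eq[OF \<open>finite A\<close>])
  also have "A \<inter> {x. P x} = {x\<in>A. P x}" by auto
  finally show ?thesis by (simp only: of_nat_bit)
qed

lemma mem_zsum_bit: "finite I \<Longrightarrow> bt (y \<in> zsum I X) = (\<Sum>i\<in>I. bt (y \<in> X i))"
  by (simp only: sum_bt_card zsum_def mem_Collect_eq)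

lemma mem_zadd: "y \<in> zadd A B \<longleftrightarrow> (y \<in> A) \<noteq> (y \<in> B)"
  by (auto simp: zadd_def)

lemma bt_xor: "bt (a \<noteq> b) = bt a + bt b"
  by (cases a; cases b) auto

lemma mem_zadd_bit: "bt (y \<in> zadd A B) = bt (y \<in> A) + bt (y \<in> B)"
  by (simp add: mem_zadd bt_xor)

lemma set_eq_bit: "(\<And>y. bt (y \<in> A) = bt (y \<in> B)) \<Longrightarrow> A = B"
  by (rule set_eqI) (metis of_bool_eq_iff)

lemma zsum_subset: "zsum I X \<subseteq> (\<Union>i\<in>I. X i)"
proof
  fix y assume "y \<in> zsum I X"
  then have "odd (card {i\<in>I. y \<in> X i})" by (simp add: zsum_def)
  then have "{i\<in>I. y \<in> X i} \<noteq> {}" by (metis card.empty even_zero)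
  then show "y \<in> (\<Union>i\<in>I. X i)" by blast
qed

lemma finite_zsum: "finite I \<Longrightarrow> (\<And>i. i \<in> I \<Longrightarrow> finite (X i)) \<Longrightarrow> finite (zsum I X)"
  by (meson finite_UN_I finite_subset zsum_subset)

lemma sum_subset_bit: "finite U \<Longrightarrow> S \<subseteq> U \<Longrightarrow> (\<Sum>j\<in>S. f j) = (\<Sum>j\<in>U. bt (j \<in> S) * (f j :: bit))"
proof -
  assume U: "finite U" "S \<subseteq> U"
  have "(\<Sum>j\<in>U. bt (j \<in> S) * f j) = (\<Sum>j\<in>U \<inter> {j. j \<in> S}. f j)"
    by (rule sum_of_bool_mult_eq[OF U(1)])
  also have "U \<inter> {j. j \<in> S} = S" using U by blast
  finally show ?thesis by simp
qed

lemma sum_zadd_bit: "finite A \<Longrightarrow> finite B \<Longrightarrow> (\<Sum>j\<in>zadd A B. f j) = (\<Sum>j\<in>A. f j) + (\<Sum>j\<in>B. (f j :: bit))"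
proof -
  assume F: "finite A" "finite B"
  let ?U = "A \<union> B"
  have "(\<Sum>j\<in>zadd A B. f j) = (\<Sum>j\<in>?U. bt (j \<in> zadd A B) * f j)"
    using F by (intro sum_subset_bit) (auto simp: zadd_def)
  also have "\<dots> = (\<Sum>j\<in>?U. bt (j \<in> A) * f j) + (\<Sum>j\<in>?U. bt (j \<in> B) * f j)"
    by (simp only: mem_zadd_bit distrib_right sum.distrib)
  also have "\<dots> = (\<Sum>j\<in>A. f j) + (\<Sum>j\<in>B. f j)"
    using F by (simp only: sum_subset_bit[of ?U A] sum_subset_bit[of ?U B] Un_upper1 Un_upper2 finite_Un)
  finally show ?thesis .
qed

lemma zsum_fubini:
  assumes "finite I" "\<And>i. i \<in> I \<Longrightarrow> finite (X i)"
  shows "zsum (zsum I X) Y = zsum I (\<lambda>i. zsum (X i) Y)"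
proof (rule set_eq_bit)
  fix y
  let ?U = "\<Union>i\<in>I. X i"
  have U: "finite ?U" using assms by blast
  have fS: "finite (zsum I X)" using assms finite_zsum by blast
  have "bt (y \<in> zsum (zsum I X) Y) = (\<Sum>j\<in>zsum I X. bt (y \<in> Y j))"
    using fS by (rule mem_zsum_bit)
  also have "\<dots> = (\<Sum>j\<in>?U. bt (j \<in> zsum I X) * bt (y \<in> Y j))"
    using U zsum_subset by (rule sum_subset_bit)
  also have "\<dots> = (\<Sum>j\<in>?U. (\<Sum>i\<in>I. bt (j \<in> X i)) * bt (y \<in> Y j))"
    using assms by (simp only: mem_zsum_bit)
  also have "\<dots> = (\<Sum>i\<in>I. \<Sum>j\<in>?U. bt (j \<in> X i) * bt (y \<in> Y j))"
    by (simp only: sum_distrib_right sum.swap[of _ ?U])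
  also have "\<dots> = (\<Sum>i\<in>I. \<Sum>j\<in>X i. bt (y \<in> Y j))"
    apply (rule sum.cong[OF refl])
    apply (rule sum_subset_bit[symmetric])
    using U apply blast+
    done
  also have "\<dots> = bt (y \<in> zsum I (\<lambda>i. zsum (X i) Y))"
    using assms by (simp add: mem_zsum_bit)
  finally show "bt (y \<in> zsum (zsum I X) Y) = bt (y \<in> zsum I (\<lambda>i. zsum (X i) Y))" .
qed

lemma zsum_zadd_idx: "finite A \<Longrightarrow> finite B \<Longrightarrow> zsum (zadd A B) Y = zadd (zsum A Y) (zsum B Y)"
  apply (rule set_eq_bit)
  apply (subst mem_zsum_bit)
   apply (simp add: zadd_def)
  apply (simp only: sum_zadd_bit mem_zadd_bit mem_zsum_bit finite_zsum)
  done

lemma zsum_empty[simp]: "zsum {} X = {}"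
  by (simp add: zsum_def)

lemma zsum_single[simp]: "zsum {a} X = X a"
  by (rule set_eq_bit) (simp add: mem_zsum_bit)

lemma zsum_id: "zsum A (\<lambda>w. {w}) = A"
proof -
  have "\<And>y. {w \<in> A. y \<in> {w}} = (if y \<in> A then {y} else {})" by auto
  then show ?thesis by (auto simp: zsum_def)
qed

lemma zsum_zero[simp]: "zsum I (\<lambda>_. {}) = {}"
  by (simp add: zsum_def)

lemma zsum_cong: "(\<And>i. i \<in> I \<Longrightarrow> X i = Y i) \<Longrightarrow> zsum I X = zsum I Y"
  unfolding zsum_def by (metis (mono_tags, lifting) Collect_cong)

lemma zsum_fun_zadd: "finite I \<Longrightarrow> zsum I (\<lambda>i. zadd (X i) (Y i)) = zadd (zsum I X) (zsum I Y)"
  by (rule set_eq_bit) (simp only: mem_zsum_bit mem_zadd_bit sum.distrib)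

lemma zsum_if: "zsum (if b then S else {}) G = (if b then zsum S G else {})"
  by simp

lemma zadd_empty[simp]: "zadd A {} = A" "zadd {} A = A" "zadd A A = {}"
  by (auto simp: zadd_def)

lemma zadd_assoc: "zadd (zadd A B) C = zadd A (zadd B C)"
  by (auto simp: zadd_def)

lemma zadd_comm: "zadd A B = zadd B A"
  by (auto simp: zadd_def)

lemma finite_zadd[simp]: "finite A \<Longrightarrow> finite B \<Longrightarrow> finite (zadd A B)"
  by (simp add: zadd_def)




lemma bt_if: "bt (y \<in> (if b then S else {})) = bt b * bt (y \<in> S)"
  by (cases b) simp_all

lemma bt_and: "bt (a \<and> b) = bt a * bt b"
  by (cases a) simp_all

lemma aug_as_zsum: "aug e A = (() \<in> zsum A (\<lambda>w. if (\<forall>x\<in>set w. e x) then {()} else {}))"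
proof -
  have "{w \<in> A. () \<in> (if (\<forall>x\<in>set w. e x) then {()} else {})} = {w\<in>A. \<forall>x\<in>set w. e x}" by auto
  then show ?thesis by (simp only: aug_def zsum_def mem_Collect_eq)
qed

lemma aug_bit: "finite A \<Longrightarrow> bt (aug e A) = (\<Sum>w\<in>A. bt (\<forall>x\<in>set w. e x))"
  by (simp only: aug_def sum_bt_card)

lemma aug_single[simp]: "aug e {w} = (\<forall>x\<in>set w. e x)"
proof -
  have "{w' \<in> {w}. \<forall>x\<in>set w'. e x} = (if \<forall>x\<in>set w. e x then {w} else {})" by auto
  then show ?thesis unfolding aug_def by simp
qed

lemma aug_empty[simp]: "aug e {} = False"
  by (simp add: aug_def)

lemma aug_zsum: "finite I \<Longrightarrow> (\<And>i. i \<in> I \<Longrightarrow> finite (X i)) \<Longrightarrow>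
   bt (aug e (zsum I X)) = (\<Sum>i\<in>I. bt (aug e (X i)))"
  by (simp only: aug_as_zsum zsum_fubini mem_zsum_bit)

lemma aug_zadd: "finite A \<Longrightarrow> finite B \<Longrightarrow> aug e (zadd A B) = (aug e A \<noteq> aug e B)"
  by (simp only: aug_as_zsum zsum_zadd_idx mem_zadd)

lemma aug_cong: "(\<And>w x. w \<in> A \<Longrightarrow> x \<in> set w \<Longrightarrow> e x = e2 x) \<Longrightarrow> aug e A = aug e2 A"
  unfolding aug_def by (rule arg_cong[where f="\<lambda>S. odd (card S)"]) auto

lemma zsum_times_single: "finite A \<Longrightarrow> zsum (A \<times> {b}) F = zsum A (\<lambda>u. F (u, b))"
  by (rule set_eq_bit) (simp add: mem_zsum_bit sum.cartesian_product')

lemma zsum_single_times: "finite B \<Longrightarrow> zsum ({a} \<times> B) F = zsum B (\<lambda>v. F (a, v))"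
  by (rule set_eq_bit) (simp add: mem_zsum_bit sum.cartesian_product')

lemma finite_mult[simp]: "finite A \<Longrightarrow> finite B \<Longrightarrow> finite (mult A B)"
  unfolding mult_def by (rule finite_zsum) auto

lemma mult_Nil_right: "finite A \<Longrightarrow> mult A {[]} = A"
  by (simp add: mult_def zsum_times_single zsum_id)

lemma mult_single[simp]: "mult {a} {b} = {a @ b}"
  by (simp add: mult_def)

lemma mult_empty[simp]: "mult A {} = {}" "mult {} B = {}"
  by (simp_all add: mult_def)

lemma aug_mult: "finite A \<Longrightarrow> finite B \<Longrightarrow> aug e (mult A B) = (aug e A \<and> aug e B)"
proof -
  assume F: "finite A" "finite B"
  have "bt (aug e (mult A B)) = (\<Sum>p\<in>A \<times> B. bt (aug e ((\<lambda>(u, v). {u @ v}) p)))"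
    unfolding mult_def using F by (intro aug_zsum) auto
  also have "\<dots> = (\<Sum>u\<in>A. \<Sum>v\<in>B. bt (\<forall>x\<in>set u. e x) * bt (\<forall>x\<in>set v. e x))"
    by (simp add: sum.cartesian_product' ball_Un)
  also have "\<dots> = bt (aug e A) * bt (aug e B)"
    using F by (simp only: aug_bit sum_product)
  also have "\<dots> = bt (aug e A \<and> aug e B)" by (simp only: bt_and)
  finally show ?thesis by (metis of_bool_eq_iff)
qed

lemma lin_word_Nil[simp]: "lin_word e [] = {}"
  by (simp add: lin_word_def)

lemma lin_word_Cons: "lin_word e (x # w) =
   zadd (if (\<forall>y\<in>set w. e y) then {x} else {}) (if e x then lin_word e w else {})"
proof (rule set_eq_bit)
  fix y
  let ?m = "length w"
  let ?C = "\<lambda>j. \<forall>l<length w. l \<noteq> j \<longrightarrow> e (w ! l)"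
  have c0: "(\<forall>l<Suc ?m. l \<noteq> 0 \<longrightarrow> e ((x # w) ! l)) = (\<forall>y\<in>set w. e y)"
  proof
    assume H: "\<forall>l<Suc ?m. l \<noteq> 0 \<longrightarrow> e ((x # w) ! l)"
    show "\<forall>y\<in>set w. e y"
    proof
      fix y assume "y \<in> set w"
      then obtain i where "i < ?m" "w ! i = y" by (auto simp: in_set_conv_nth)
      then show "e y" using H[rule_format, of "Suc i"] by simp
    qed
  next
    assume H: "\<forall>y\<in>set w. e y"
    show "\<forall>l<Suc ?m. l \<noteq> 0 \<longrightarrow> e ((x # w) ! l)"
    proof (intro allI impI)
      fix l assume "l < Suc ?m" "l \<noteq> 0"
      then obtain i where "l = Suc i" "i < ?m" by (cases l) auto
      then show "e ((x # w) ! l)" using H by simp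
    qed
  qed
  have cS: "\<And>i. (\<forall>l<Suc ?m. l \<noteq> Suc i \<longrightarrow> e ((x # w) ! l)) = (e x \<and> ?C i)"
    by (auto simp: less_Suc_eq_0_disj)
  have lw: "bt (y \<in> lin_word e w) = (\<Sum>i<?m. bt (y \<in> (if ?C i then {w ! i} else {})))"
    unfolding lin_word_def lessThan_def[symmetric] by (rule mem_zsum_bit) simp
  have "bt (y \<in> lin_word e (x # w)) =
     (\<Sum>j<Suc ?m. bt (y \<in> (if (\<forall>l<Suc ?m. l \<noteq> j \<longrightarrow> e ((x # w) ! l)) then {(x # w) ! j} else {})))"
    by (simp add: lin_word_def mem_zsum_bit lessThan_def)
  also have "\<dots> = bt (y \<in> (if (\<forall>y\<in>set w. e y) then {x} else {})) +
      (\<Sum>i<?m. bt (e x) * bt (y \<in> (if ?C i then {w ! i} else {})))"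
    by (simp only: sum.lessThan_Suc_shift c0 cS nth_Cons_0 nth_Cons_Suc bt_if bt_and mult.assoc)
  also have "\<dots> = bt (y \<in> (if (\<forall>y\<in>set w. e y) then {x} else {})) + bt (e x) * bt (y \<in> lin_word e w)"
    by (simp only: lw sum_distrib_left)
  also have "\<dots> = bt (y \<in> zadd (if (\<forall>y\<in>set w. e y) then {x} else {}) (if e x then lin_word e w else {}))"
    by (simp only: mem_zadd_bit bt_if)
  finally show "bt (y \<in> lin_word e (x # w)) = \<dots>" .
qed

lemma lin_word_single[simp]: "lin_word e [x] = {x}"
  by (simp add: lin_word_Cons)

lemma lin_word_subset: "lin_word e w \<subseteq> set w"
  by (induction w) (auto simp: lin_word_Cons zadd_def)

lemma finite_lin_word[simp]: "finite (lin_word e w)"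
  by (meson finite_set finite_subset lin_word_subset)

lemma lin_word_mem: "y \<in> lin_word e w \<Longrightarrow> \<exists>m<length w. w ! m = y \<and> (\<forall>l<length w. l \<noteq> m \<longrightarrow> e (w ! l))"
proof -
  assume "y \<in> lin_word e w"
  then obtain j where "j < length w" "y \<in> (if (\<forall>l<length w. l \<noteq> j \<longrightarrow> e (w ! l)) then {w ! j} else {})"
  proof -
    have "lin_word e w \<subseteq> (\<Union>j\<in>{j. j < length w}. (if (\<forall>l<length w. l \<noteq> j \<longrightarrow> e (w ! l)) then {w ! j} else {}))"
      unfolding lin_word_def by (rule zsum_subset)
    then show ?thesis using that \<open>y \<in> lin_word e w\<close> by blast
  qed
  then show ?thesis by (auto split: if_splits)
qed

lemma lin_word_cong: "(\<And>x. x \<in> set w \<Longrightarrow> e x = e2 x) \<Longrightarrow> lin_word e w = lin_word e2 w"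
  by (induction w) (auto simp: lin_word_Cons)

lemma zadd_if_aux: "zadd (if a \<and> b then {x} else {}) (if c then zadd (if b then U else {}) (if a then V else {}) else {})
  = zadd (if b then zadd (if a then {x} else {}) (if c then U else {}) else {}) (if c \<and> a then V else {})"
  by (cases a; cases b; cases c) (simp_all add: zadd_assoc)

lemma lin_word_append: "lin_word e (u @ v) =
   zadd (if (\<forall>x\<in>set v. e x) then lin_word e u else {}) (if (\<forall>x\<in>set u. e x) then lin_word e v else {})"
proof (induction u)
  case Nil
  then show ?case by simp
next
  case (Cons x u)
  have "lin_word e ((x # u) @ v) = zadd (if (\<forall>y\<in>set (u @ v). e y) then {x} else {})
        (if e x then lin_word e (u @ v) else {})"
    by (simp only: append_Cons lin_word_Cons)
  also have "\<dots> = zadd (if (\<forall>y\<in>set u. e y) \<and> (\<forall>y\<in>set v. e y) then {x} else {})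
        (if e x then zadd (if (\<forall>x\<in>set v. e x) then lin_word e u else {}) (if (\<forall>x\<in>set u. e x) then lin_word e v else {}) else {})"
    by (simp only: Cons.IH set_append ball_Un)
  also have "\<dots> = zadd (if (\<forall>x\<in>set v. e x) then lin_word e (x # u) else {}) (if (\<forall>y\<in>set (x # u). e y) then lin_word e v else {})"
    unfolding lin_word_Cons set_simps ball_simps by (rule zadd_if_aux)
  finally show ?case .
qed




lemma lin_single[simp]: "lin e {w} = lin_word e w"
  by (simp add: lin_def)

lemma lin_gen[simp]: "lin e {[i]} = {i}"
  by simp

lemma lin_empty[simp]: "lin e {} = {}"
  by (simp add: lin_def)

lemma lin_zsum: "finite I \<Longrightarrow> (\<And>i. i \<in> I \<Longrightarrow> finite (X i)) \<Longrightarrow> lin e (zsum I X) = zsum I (\<lambda>i. lin e (X i))"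
  unfolding lin_def by (rule zsum_fubini)

lemma lin_zadd: "finite A \<Longrightarrow> finite B \<Longrightarrow> lin e (zadd A B) = zadd (lin e A) (lin e B)"
  unfolding lin_def by (rule zsum_zadd_idx)

lemma finite_lin[simp]: "finite A \<Longrightarrow> finite (lin e A)"
  unfolding lin_def by (rule finite_zsum) auto

lemma lin_if: "lin e (if b then A else {}) = (if b then lin e A else {})"
  by simp

lemma lin_mem: "y \<in> lin e A \<Longrightarrow> \<exists>w\<in>A. \<exists>m<length w. w ! m = y \<and> (\<forall>l<length w. l \<noteq> m \<longrightarrow> e (w ! l))"
proof -
  assume y: "y \<in> lin e A"
  have "lin e A \<subseteq> (\<Union>w\<in>A. lin_word e w)" unfolding lin_def by (rule zsum_subset)
  then obtain w where "w \<in> A" "y \<in> lin_word e w" using y by blast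
  then show ?thesis using lin_word_mem by blast
qed

lemma lin_mult: "finite P \<Longrightarrow> finite Q \<Longrightarrow>
  lin e (mult P Q) = zadd (if aug e Q then lin e P else {}) (if aug e P then lin e Q else {})"
proof (rule set_eq_bit)
  fix y
  assume F: "finite P" "finite Q"
  let ?T = "\<lambda>w. bt (\<forall>x\<in>set w. e x)"
  let ?L = "\<lambda>w. bt (y \<in> lin_word e w)"
  have "lin e (mult P Q) = zsum (P \<times> Q) (\<lambda>p. lin e ((\<lambda>(u, v). {u @ v}) p))"
    unfolding mult_def using F by (intro lin_zsum) auto
  also have "\<dots> = zsum (P \<times> Q) (\<lambda>(u, v). lin_word e (u @ v))"
    by (intro zsum_cong) auto
  finally have "bt (y \<in> lin e (mult P Q)) = (\<Sum>u\<in>P. \<Sum>v\<in>Q. bt (y \<in> lin_word e (u @ v)))"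
    using F by (simp add: mem_zsum_bit sum.cartesian_product')
  also have "\<dots> = (\<Sum>u\<in>P. \<Sum>v\<in>Q. ?L u * ?T v + ?T u * ?L v)"
    by (simp only: lin_word_append mem_zadd_bit bt_if mult.commute)
  also have "\<dots> = (\<Sum>u\<in>P. ?L u) * (\<Sum>v\<in>Q. ?T v) + (\<Sum>u\<in>P. ?T u) * (\<Sum>v\<in>Q. ?L v)"
    by (simp only: sum.distrib sum_product)
  also have "\<dots> = bt (y \<in> lin e P) * bt (aug e Q) + bt (aug e P) * bt (y \<in> lin e Q)"
    using F by (simp only: aug_bit lin_def mem_zsum_bit)
  also have "\<dots> = bt (y \<in> zadd (if aug e Q then lin e P else {}) (if aug e P then lin e Q else {}))"
    by (simp only: mem_zadd_bit bt_if mult.commute)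
  finally show "bt (y \<in> lin e (mult P Q)) = \<dots>" .
qed

lemma finite_word_eval: "(\<And>x. x \<in> set w \<Longrightarrow> finite (f x)) \<Longrightarrow> finite (word_eval f w)"
  by (induction w) auto

lemma finite_eval: "finite A \<Longrightarrow> (\<And>x. finite (f x)) \<Longrightarrow> finite (eval f A)"
  unfolding eval_def by (intro finite_zsum finite_word_eval) auto

lemma aug_word_eval: "(\<And>x. finite (f x)) \<Longrightarrow> aug e (word_eval f w) = (\<forall>x\<in>set w. aug e (f x))"
  by (induction w) (auto simp: aug_mult finite_word_eval)

lemma aug_eval: "finite A \<Longrightarrow> (\<And>x. finite (f x)) \<Longrightarrow> aug e (eval f A) = aug (\<lambda>i. aug e (f i)) A"
proof -
  assume F: "finite A" "\<And>x. finite (f x)"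
  have "bt (aug e (eval f A)) = (\<Sum>w\<in>A. bt (aug e (word_eval f w)))"
    unfolding eval_def using F by (intro aug_zsum finite_word_eval) auto
  also have "\<dots> = bt (aug (\<lambda>i. aug e (f i)) A)"
    using F by (simp add: aug_word_eval aug_bit)
  finally show ?thesis by (metis of_bool_eq_iff)
qed

lemma lin_word_eval: "(\<And>x. finite (f x)) \<Longrightarrow>
  lin e (word_eval f w) = zsum (lin_word (\<lambda>i. aug e (f i)) w) (\<lambda>i. lin e (f i))"
proof (induction w)
  case Nil
  then show ?case by simp
next
  case (Cons x w)
  have fw: "finite (word_eval f w)" using Cons.prems by (intro finite_word_eval) auto
  have "lin e (word_eval f (x # w)) = zadd (if aug e (word_eval f w) then lin e (f x) else {})
     (if aug e (f x) then lin e (word_eval f w) else {})"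
    using fw Cons.prems by (simp add: lin_mult)
  also have "\<dots> = zadd (if (\<forall>y\<in>set w. aug e (f y)) then lin e (f x) else {})
     (if aug e (f x) then zsum (lin_word (\<lambda>i. aug e (f i)) w) (\<lambda>i. lin e (f i)) else {})"
    using Cons by (simp add: aug_word_eval)
  also have "\<dots> = zsum (lin_word (\<lambda>i. aug e (f i)) (x # w)) (\<lambda>i. lin e (f i))"
    by (cases "aug e (f x)"; cases "\<forall>y\<in>set w. aug e (f y)") (auto simp add: lin_word_Cons zsum_zadd_idx)
  finally show ?case .
qed

lemma lin_eval: "finite A \<Longrightarrow> (\<And>x. finite (f x)) \<Longrightarrow>
  lin e (eval f A) = zsum (lin (\<lambda>i. aug e (f i)) A) (\<lambda>i. lin e (f i))"
proof -
  assume F: "finite A" "\<And>x. finite (f x)"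
  have "lin e (eval f A) = zsum A (\<lambda>w. lin e (word_eval f w))"
    unfolding eval_def using F by (intro lin_zsum finite_word_eval) auto
  also have "\<dots> = zsum A (\<lambda>w. zsum (lin_word (\<lambda>i. aug e (f i)) w) (\<lambda>i. lin e (f i)))"
    using F by (intro zsum_cong lin_word_eval) auto
  also have "\<dots> = zsum (lin (\<lambda>i. aug e (f i)) A) (\<lambda>i. lin e (f i))"
    unfolding lin_def using F by (intro zsum_fubini[symmetric]) auto
  finally show ?thesis .
qed

lemma eval_single: "finite (f x) \<Longrightarrow> eval f {[x]} = f x"
  by (simp add: eval_def mult_Nil_right)

lemma eval_zadd: "finite A \<Longrightarrow> finite B \<Longrightarrow> eval f (zadd A B) = zadd (eval f A) (eval f B)"
  unfolding eval_def by (rule zsum_zadd_idx)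

lemma word_eval_id: "(\<And>x. x \<in> set w \<Longrightarrow> f x = {[x]}) \<Longrightarrow> word_eval f w = {w}"
  by (induction w) auto

lemma eval_id: "(\<And>w x. w \<in> A \<Longrightarrow> x \<in> set w \<Longrightarrow> f x = {[x]}) \<Longrightarrow> eval f A = A"
proof -
  assume H: "\<And>w x. w \<in> A \<Longrightarrow> x \<in> set w \<Longrightarrow> f x = {[x]}"
  have "eval f A = zsum A (\<lambda>w. {w})"
    unfolding eval_def using H by (intro zsum_cong word_eval_id) auto
  then show ?thesis by (simp add: zsum_id)
qed

lemma finite_dword: "(\<And>x. x \<in> set w \<Longrightarrow> finite (d x)) \<Longrightarrow> finite (dword d w)"
  by (induction w) auto

lemma dword_props: "(\<And>x. x \<in> set w \<Longrightarrow> finite (d x) \<and> \<not> aug e (d x)) \<Longrightarrow>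
   \<not> aug e (dword d w) \<and> lin e (dword d w) = zsum (lin_word e w) (\<lambda>i. lin e (d i))"
proof (induction w)
  case Nil
  then show ?case by simp
next
  case (Cons x w)
  have fw: "finite (dword d w)" using Cons.prems by (intro finite_dword) auto
  have fx: "finite (d x)" "\<not> aug e (d x)" using Cons.prems by auto
  have IH: "\<not> aug e (dword d w)" "lin e (dword d w) = zsum (lin_word e w) (\<lambda>i. lin e (d i))"
    using Cons by auto
  have "\<not> aug e (dword d (x # w))"
    using fw fx IH by (simp add: aug_zadd aug_mult)
  moreover have "lin e (dword d (x # w)) = zsum (lin_word e (x # w)) (\<lambda>i. lin e (d i))"
  proof -
    have "lin e (dword d (x # w)) = zadd (lin e (mult (d x) {w})) (lin e (mult {[x]} (dword d w)))"
      using fw fx by (simp add: lin_zadd)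
    also have "\<dots> = zadd (if (\<forall>y\<in>set w. e y) then lin e (d x) else {})
        (if e x then zsum (lin_word e w) (\<lambda>i. lin e (d i)) else {})"
      using fw fx IH by (simp add: lin_mult)
    also have "\<dots> = zsum (lin_word e (x # w)) (\<lambda>i. lin e (d i))"
      by (cases "aug e (f x)"; cases "\<forall>y\<in>set w. aug e (f y)") (auto simp add: lin_word_Cons zsum_zadd_idx)
    finally show ?thesis .
  qed
  ultimately show ?case by blast
qed

lemma dext_props: "finite B \<Longrightarrow> (\<And>w x. w \<in> B \<Longrightarrow> x \<in> set w \<Longrightarrow> finite (d x) \<and> \<not> aug e (d x)) \<Longrightarrow>
   \<not> aug e (dext d B) \<and> lin e (dext d B) = zsum (lin e B) (\<lambda>i. lin e (d i))"
proof -
  assume F: "finite B" and H: "\<And>w x. w \<in> B \<Longrightarrow> x \<in> set w \<Longrightarrow> finite (d x) \<and> \<not> aug e (d x)"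
  have fd: "\<And>w. w \<in> B \<Longrightarrow> finite (dword d w)" using H by (intro finite_dword) blast
  have "bt (aug e (dext d B)) = (\<Sum>w\<in>B. bt (aug e (dword d w)))"
    unfolding dext_def using F fd by (intro aug_zsum) auto
  also have "\<dots> = 0" using dword_props H by simp
  finally have 1: "\<not> aug e (dext d B)" by simp
  have "lin e (dext d B) = zsum B (\<lambda>w. lin e (dword d w))"
    unfolding dext_def using F fd by (intro lin_zsum) auto
  also have "\<dots> = zsum B (\<lambda>w. zsum (lin_word e w) (\<lambda>i. lin e (d i)))"
    using dword_props H by (intro zsum_cong) blast
  also have "\<dots> = zsum (lin e B) (\<lambda>i. lin e (d i))"
    unfolding lin_def using F by (intro zsum_fubini[symmetric]) auto
  finally show ?thesis using 1 by blast
qed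

lemma dext_gen: "finite (d i) \<Longrightarrow> dext d {[i]} = d i"
  by (simp add: dext_def mult_Nil_right)




definition aug_ok :: "nat \<Rightarrow> (nat \<Rightarrow> int) \<Rightarrow> (nat \<Rightarrow> elt) \<Rightarrow> (nat \<Rightarrow> bool) \<Rightarrow> bool" where
  "aug_ok n g d e \<longleftrightarrow> (\<forall>i<n. \<not> aug e (d i)) \<and> (\<forall>i<n. e i \<longrightarrow> g i = 0)"

definition good_pair :: "nat \<Rightarrow> (nat \<Rightarrow> int) \<Rightarrow> (nat \<Rightarrow> real) \<Rightarrow> (nat \<Rightarrow> elt) \<Rightarrow> (nat \<Rightarrow> bool) \<Rightarrow> (nat \<Rightarrow> bool)
   \<Rightarrow> (nat set \<Rightarrow> nat set) \<Rightarrow> (nat set \<Rightarrow> nat set) \<Rightarrow> bool" where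
  "good_pair n g h d ea eb F G \<longleftrightarrow>
    (\<forall>V. V \<subseteq> {..<n} \<longrightarrow> F V \<subseteq> {..<n} \<and> G V \<subseteq> {..<n}) \<and>
    (\<forall>V W. V \<subseteq> {..<n} \<longrightarrow> W \<subseteq> {..<n} \<longrightarrow> F (zadd V W) = zadd (F V) (F W) \<and> G (zadd V W) = zadd (G V) (G W)) \<and>
    (\<forall>V t k. V \<in> filt n h t \<longrightarrow> homog g k V \<longrightarrow>
        F V \<in> filt n h t \<and> homog g k (F V) \<and> G V \<in> filt n h t \<and> homog g k (G V)) \<and>
    (\<forall>V. V \<subseteq> {..<n} \<longrightarrow> F (lin_diff d eb V) = lin_diff d ea (F V) \<and> G (lin_diff d ea V) = lin_diff d eb (G V)) \<and>
    (\<forall>V. V \<subseteq> {..<n} \<longrightarrow> G (F V) = V \<and> F (G V) = V)"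

lemma good_id: "good_pair n g h d e e id id"
  by (simp add: good_pair_def)

lemma good_pairD:
  assumes "good_pair n g h d ea eb F G"
  shows "\<And>V. V \<subseteq> {..<n} \<Longrightarrow> F V \<subseteq> {..<n}"
    and "\<And>V. V \<subseteq> {..<n} \<Longrightarrow> G V \<subseteq> {..<n}"
    and "\<And>V W. V \<subseteq> {..<n} \<Longrightarrow> W \<subseteq> {..<n} \<Longrightarrow> F (zadd V W) = zadd (F V) (F W)"
    and "\<And>V W. V \<subseteq> {..<n} \<Longrightarrow> W \<subseteq> {..<n} \<Longrightarrow> G (zadd V W) = zadd (G V) (G W)"
    and "\<And>V t k. V \<in> filt n h t \<Longrightarrow> homog g k V \<Longrightarrow> F V \<in> filt n h t"
    and "\<And>V t k. V \<in> filt n h t \<Longrightarrow> homog g k V \<Longrightarrow> homog g k (F V)"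
    and "\<And>V t k. V \<in> filt n h t \<Longrightarrow> homog g k V \<Longrightarrow> G V \<in> filt n h t"
    and "\<And>V t k. V \<in> filt n h t \<Longrightarrow> homog g k V \<Longrightarrow> homog g k (G V)"
    and "\<And>V. V \<subseteq> {..<n} \<Longrightarrow> F (lin_diff d eb V) = lin_diff d ea (F V)"
    and "\<And>V. V \<subseteq> {..<n} \<Longrightarrow> G (lin_diff d ea V) = lin_diff d eb (G V)"
    and "\<And>V. V \<subseteq> {..<n} \<Longrightarrow> G (F V) = V"
    and "\<And>V. V \<subseteq> {..<n} \<Longrightarrow> F (G V) = V"
  using assms unfolding good_pair_def by meson+

lemma good_comp:
  assumes A: "good_pair n g h d ea eb F1 G1" and B: "good_pair n g h d eb ec F2 G2"
  shows "good_pair n g h d ea ec (F1 \<circ> F2) (G2 \<circ> G1)"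
proof -
  note a = good_pairD[OF A] and b = good_pairD[OF B]
  show ?thesis
    unfolding good_pair_def o_def
    apply (intro conjI allI impI)
               apply (metis a(1) b(1))
              apply (metis a(2) b(2))
             apply (metis a(3) b(1) b(3))
            apply (metis a(2) a(4) b(4))
           apply (metis a(5) b(5) b(6))
          apply (metis a(6) b(5) b(6))
         apply (metis a(7) a(8) b(7))
        apply (metis a(7) a(8) b(8))
       apply (metis a(9) b(1) b(9))
      apply (metis a(10) a(2) b(10))
     apply (metis a(11) b(1) b(11))
    apply (metis a(12) a(2) b(12))
    done
qed

lemma wdeg_single:
  assumes "m < length w" "\<And>l. l < length w \<Longrightarrow> l \<noteq> m \<Longrightarrow> g (w ! l) = 0"
  shows "wdeg g w = g (w ! m)"
proof -
  have "wdeg g w = (\<Sum>l\<in>{..<length w}. g (w ! l))"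
    unfolding wdeg_def by (simp add: sum_list_sum_nth atLeast0LessThan)
  also have "\<dots> = g (w ! m) + (\<Sum>l\<in>{..<length w} - {m}. g (w ! l))"
    using assms(1) by (simp add: sum.remove)
  also have "(\<Sum>l\<in>{..<length w} - {m}. g (w ! l)) = 0"
    using assms(2) by (intro sum.neutral) auto
  finally show ?thesis by simp
qed

lemma wdeg_zero: "(\<And>x. x \<in> set w \<Longrightarrow> g x = 0) \<Longrightarrow> wdeg g w = 0"
  unfolding wdeg_def by (induction w) auto

lemma lin_map_subset: "lin_map f e V \<subseteq> (\<Union>i\<in>V. lin e (f i))"
  unfolding lin_map_def linext_def by (rule zsum_subset)

lemma lin_map_zadd: "finite V \<Longrightarrow> finite W \<Longrightarrow> lin_map f e (zadd V W) = zadd (lin_map f e V) (lin_map f e W)"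
  unfolding lin_map_def linext_def by (rule zsum_zadd_idx)

lemma chain_generic:
  assumes ffin: "\<And>x. finite (f x)"
    and fch: "\<And>i. i < n \<Longrightarrow> dext d (f i) = eval f (d i)"
    and flet: "\<And>i w. i < n \<Longrightarrow> w \<in> f i \<Longrightarrow> set w \<subseteq> {..<n}"
    and dfin: "\<And>i. i < n \<Longrightarrow> finite (d i)"
    and ea: "\<And>x. x < n \<Longrightarrow> \<not> aug ea (d x)"
    and eb: "eb = (\<lambda>x. aug ea (f x))"
    and V: "V \<subseteq> {..<n}"
  shows "lin_map f ea (lin_diff d eb V) = lin_diff d ea (lin_map f ea V)"
proof -
  have fV: "finite V" using V finite_subset by blast
  have "lin_map f ea (lin_diff d eb V) = zsum V (\<lambda>i. zsum (lin eb (d i)) (\<lambda>x. lin ea (f x)))"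
    unfolding lin_map_def lin_diff_def linext_def
    using fV V dfin by (intro zsum_fubini) auto
  also have "\<dots> = zsum V (\<lambda>i. zsum (lin ea (f i)) (\<lambda>x. lin ea (d x)))"
  proof (rule zsum_cong)
    fix i assume "i \<in> V"
    then have i: "i < n" using V by auto
    have "zsum (lin ea (f i)) (\<lambda>x. lin ea (d x)) = lin ea (dext d (f i))"
      using dext_props[of "f i" d ea] ffin flet[OF i] dfin ea by fastforce
    also have "\<dots> = lin ea (eval f (d i))" using fch[OF i] by simp
    also have "\<dots> = zsum (lin eb (d i)) (\<lambda>x. lin ea (f x))"
      unfolding eb by (rule lin_eval[OF dfin[OF i] ffin])
    finally show "zsum (lin eb (d i)) (\<lambda>x. lin ea (f x)) = zsum (lin ea (f i)) (\<lambda>x. lin ea (d x))" by simp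
  qed
  also have "\<dots> = lin_diff d ea (lin_map f ea V)"
    unfolding lin_map_def lin_diff_def linext_def
    using fV ffin by (intro zsum_fubini[symmetric]) auto
  finally show ?thesis .
qed

lemma inv_generic:
  assumes ffin: "\<And>x. finite (f x)"
    and finv: "\<And>x. eval f (f x) = {[x]}"
    and eb: "eb = (\<lambda>x. aug ea (f x))"
    and fV: "finite V"
  shows "lin_map f ea (lin_map f eb V) = V"
proof -
  have "lin_map f ea (lin_map f eb V) = zsum V (\<lambda>i. zsum (lin eb (f i)) (\<lambda>x. lin ea (f x)))"
    unfolding lin_map_def linext_def using fV ffin by (intro zsum_fubini) auto
  also have "\<dots> = zsum V (\<lambda>i. {i})"
  proof (rule zsum_cong)
    fix i
    have "zsum (lin eb (f i)) (\<lambda>x. lin ea (f x)) = lin ea (eval f (f i))"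
      unfolding eb by (rule lin_eval[OF ffin[of i] ffin, symmetric])
    then show "zsum (lin eb (f i)) (\<lambda>x. lin ea (f x)) = {i}" using finv by simp
  qed
  also have "\<dots> = V" by (rule zsum_id)
  finally show ?thesis .
qed




lemma E_other: "x \<noteq> j \<Longrightarrow> elem_map j u x = {[x]}"
  by (simp add: elem_map_def)

lemma E_fin: "finite u \<Longrightarrow> finite (elem_map j u x)"
  by (simp add: elem_map_def)

lemma E_inv:
  assumes fu: "finite u" and uj: "\<And>w. w \<in> u \<Longrightarrow> j \<notin> set w"
  shows "eval (elem_map j u) (elem_map j u x) = {[x]}"
proof (cases "x = j")
  case True
  have Eu: "eval (elem_map j u) u = u"
    using uj by (intro eval_id) (auto simp: elem_map_def)
  have "eval (elem_map j u) (elem_map j u x) = eval (elem_map j u) (zadd {[j]} u)"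
    using True by (simp add: elem_map_def)
  also have "\<dots> = zadd (elem_map j u j) u"
    using fu E_fin[OF fu] by (simp add: eval_zadd eval_single Eu)
  also have "\<dots> = {[x]}" using True by (simp add: elem_map_def zadd_assoc)
  finally show ?thesis .
next
  case False
  then show ?thesis by (simp add: E_other eval_single)
qed

lemma aug_inv:
  assumes fu: "finite u" and uj: "\<And>w. w \<in> u \<Longrightarrow> j \<notin> set w"
  shows "(\<lambda>x. aug (\<lambda>y. aug e (elem_map j u y)) (elem_map j u x)) = e"
proof
  fix x
  have "aug (\<lambda>y. aug e (elem_map j u y)) (elem_map j u x) = aug e (eval (elem_map j u) (elem_map j u x))"
    using E_fin[OF fu] by (intro aug_eval[symmetric]) auto
  also have "\<dots> = e x" using E_inv[OF fu uj] by simp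
  finally show "aug (\<lambda>y. aug e (elem_map j u y)) (elem_map j u x) = e x" .
qed

lemma letters_E:
  assumes el: "elem_aut n g d j u" and sm: "semimonotonic h j u"
    and ea: "\<And>x. x < n \<Longrightarrow> ea x \<Longrightarrow> g x = 0"
    and i: "i < n"
  shows "lin ea (elem_map j u i) \<subseteq> {y. y < n \<and> h y \<le> h i \<and> g y = g i}"
proof
  fix y assume "y \<in> lin ea (elem_map j u i)"
  then obtain w m where w: "w \<in> elem_map j u i" "m < length w" "w ! m = y"
      "\<And>l. l < length w \<Longrightarrow> l \<noteq> m \<Longrightarrow> ea (w ! l)"
    using lin_mem by blast
  have "dga_map n g d g d (elem_map j u)" using el by (simp add: elem_aut_def)
  then have "\<forall>w\<in>elem_map j u i. set w \<subseteq> {..<n} \<and> wdeg g w = g i"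
    using i unfolding dga_map_def by blast
  then have dm: "set w \<subseteq> {..<n}" "wdeg g w = g i" using w(1) by auto
  have yw: "y \<in> set w" using w(2,3) nth_mem by blast
  then have yn: "y < n" using dm by auto
  have "wdeg g w = g (w ! m)"
    using w(2) proof (rule wdeg_single)
    fix l assume "l < length w" "l \<noteq> m"
    then have "w ! l \<in> set w" by simp
    then have "w ! l < n" using dm(1) by auto
    then show "g (w ! l) = 0" using ea w(4) \<open>l < length w\<close> \<open>l \<noteq> m\<close> by blast
  qed
  then have gy: "g y = g i" using dm w(3) by simp
  have "h y \<le> h i"
  proof (cases "i = j")
    case True
    then have "w \<in> zadd {[j]} u" using w(1) by (simp add: elem_map_def)
    then have "w = [j] \<or> w \<in> u" by (auto simp: zadd_def)
    then show ?thesis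
    proof
      assume "w = [j]" then show ?thesis using yw True by simp
    next
      assume "w \<in> u"
      then have "h y < h j" using sm yw unfolding semimonotonic_def by blast
      then show ?thesis using True by simp
    qed
  next
    case False
    then have "w = [i]" using w(1) by (simp add: E_other)
    then show ?thesis using yw by simp
  qed
  then show "y \<in> {y. y < n \<and> h y \<le> h i \<and> g y = g i}" using yn gy by simp
qed

lemma step_filt:
  assumes el: "elem_aut n g d j u" and sm: "semimonotonic h j u"
    and ea: "\<And>x. x < n \<Longrightarrow> ea x \<Longrightarrow> g x = 0"
    and V: "V \<in> filt n h t" "homog g k V"
  shows "lin_map (elem_map j u) ea V \<in> filt n h t \<and> homog g k (lin_map (elem_map j u) ea V)"
proof -
  have "lin_map (elem_map j u) ea V \<subseteq> (\<Union>i\<in>V. lin ea (elem_map j u i))" by (rule lin_map_subset)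
  also have "\<dots> \<subseteq> {y. y < n \<and> h y \<le> t \<and> g y = k}"
  proof (rule UN_least)
    fix i assume iV: "i \<in> V"
    then have i: "i < n" "h i \<le> t" "g i = k" using V unfolding filt_def homog_def by auto
    have L: "lin ea (elem_map j u i) \<subseteq> {y. y < n \<and> h y \<le> h i \<and> g y = g i}"
      by (rule letters_E[OF el sm ea i(1)])
    show "lin ea (elem_map j u i) \<subseteq> {y. y < n \<and> h y \<le> t \<and> g y = k}"
    proof
      fix y assume "y \<in> lin ea (elem_map j u i)"
      then have "y < n \<and> h y \<le> h i \<and> g y = g i" using L by blast
      then show "y \<in> {y. y < n \<and> h y \<le> t \<and> g y = k}" using i by auto
    qed
  qed
  finally show ?thesis unfolding filt_def homog_def by auto
qed

lemma step_lemma: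
  assumes dfin: "\<And>i. i < n \<Longrightarrow> finite (d i)"
    and el: "elem_aut n g d j u" and sm: "semimonotonic h j u"
    and ok1: "aug_ok n g d (\<lambda>x. aug e (elem_map j u x))"
  shows "aug_ok n g d e \<and> good_pair n g h d e (\<lambda>x. aug e (elem_map j u x))
           (lin_map (elem_map j u) e) (lin_map (elem_map j u) (\<lambda>x. aug e (elem_map j u x)))"
proof -
  let ?E = "elem_map j u"
  let ?e1 = "\<lambda>x. aug e (?E x)"
  have el': "j < n \<and> finite u \<and> (\<forall>w\<in>u. set w \<subseteq> {..<n} - {j}) \<and> dga_map n g d g d ?E"
    using el unfolding elem_aut_def .
  have fu: "finite u" and uj0: "\<forall>w\<in>u. set w \<subseteq> {..<n} - {j}" and dga: "dga_map n g d g d ?E"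
    using el' by blast+
  have dga': "\<forall>i<n. finite (?E i) \<and> (\<forall>w\<in>?E i. set w \<subseteq> {..<n} \<and> wdeg g w = g i) \<and> dext d (?E i) = eval ?E (d i)"
    using dga unfolding dga_map_def .
  have uj: "\<And>w. w \<in> u \<Longrightarrow> j \<notin> set w" using uj0 by auto
  have Efin: "\<And>x. finite (?E x)" using E_fin[OF fu] .
  have Ech: "\<And>i. i < n \<Longrightarrow> dext d (?E i) = eval ?E (d i)" using dga' by blast
  have Elet: "\<And>i w. i < n \<Longrightarrow> w \<in> ?E i \<Longrightarrow> set w \<subseteq> {..<n}" using dga' by blast
  have Edeg: "\<And>i w. i < n \<Longrightarrow> w \<in> ?E i \<Longrightarrow> wdeg g w = g i" using dga' by blast
  have einv: "(\<lambda>x. aug ?e1 (?E x)) = e" by (rule aug_inv[OF fu uj])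
  have ok1a: "\<And>x. x < n \<Longrightarrow> \<not> aug ?e1 (d x)" and ok1b: "\<And>x. x < n \<Longrightarrow> ?e1 x \<Longrightarrow> g x = 0"
    using ok1 unfolding aug_ok_def by auto
  have oka: "\<And>i. i < n \<Longrightarrow> \<not> aug e (d i)"
  proof -
    fix i assume i: "i < n"
    have "aug e (d i) = aug (\<lambda>x. aug ?e1 (?E x)) (d i)" using einv by simp
    also have "\<dots> = aug ?e1 (eval ?E (d i))" using dfin[OF i] Efin by (intro aug_eval[symmetric])
    also have "\<dots> = aug ?e1 (dext d (?E i))" using Ech[OF i] by simp
    also have "\<not> \<dots>"
    proof -
      have H: "\<And>w x. w \<in> ?E i \<Longrightarrow> x \<in> set w \<Longrightarrow> finite (d x) \<and> \<not> aug ?e1 (d x)"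
      proof -
        fix w x assume "w \<in> ?E i" "x \<in> set w"
        then have "x < n" using Elet[OF i] by blast
        then show "finite (d x) \<and> \<not> aug ?e1 (d x)" using dfin ok1a by blast
      qed
      have "\<not> aug ?e1 (dext d (?E i)) \<and> lin ?e1 (dext d (?E i)) = zsum (lin ?e1 (?E i)) (\<lambda>k. lin ?e1 (d k))"
        apply (rule dext_props)
         apply (rule Efin)
        apply (rule H)
         apply assumption+
        done
      then show ?thesis by blast
    qed
    finally show "\<not> aug e (d i)" .
  qed
  have okb: "\<And>x. x < n \<Longrightarrow> e x \<Longrightarrow> g x = 0"
  proof (rule ccontr)
    fix x assume x: "x < n" "e x" "g x \<noteq> 0"
    have "{w \<in> ?E x. \<forall>y\<in>set w. ?e1 y} = {}"
    proof (rule ccontr)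
      assume "{w \<in> ?E x. \<forall>y\<in>set w. ?e1 y} \<noteq> {}"
      then obtain w where w: "w \<in> ?E x" "\<forall>y\<in>set w. ?e1 y" by blast
      have "wdeg g w = 0" using w(2) Elet[OF x(1) w(1)] ok1b by (intro wdeg_zero) auto
      then show False using Edeg[OF x(1) w(1)] x(3) by simp
    qed
    then have c0: "card {w \<in> ?E x. \<forall>y\<in>set w. ?e1 y} = 0" by (simp only: card.empty)
    have "aug ?e1 (?E x) = odd (card {w \<in> ?E x. \<forall>y\<in>set w. ?e1 y})" by (rule aug_def)
    then have "\<not> aug ?e1 (?E x)" by (simp add: c0)
    moreover have "aug ?e1 (?E x) = e x" using fun_cong[OF einv, of x] by simp
    ultimately show False using x(2) by simp
  qed
  have oke: "aug_ok n g d e" unfolding aug_ok_def using oka okb by blast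
  have sub: "\<And>ea V. (\<And>x. x < n \<Longrightarrow> ea x \<Longrightarrow> g x = 0) \<Longrightarrow> V \<subseteq> {..<n} \<Longrightarrow> lin_map ?E ea V \<subseteq> {..<n}"
  proof -
    fix ea V assume ea: "\<And>x. x < n \<Longrightarrow> ea x \<Longrightarrow> g x = 0" and V: "V \<subseteq> {..<n}"
    have "lin_map ?E ea V \<subseteq> (\<Union>i\<in>V. lin ea (?E i))" by (rule lin_map_subset)
    also have "\<dots> \<subseteq> {..<n}"
    proof (rule UN_least)
      fix i assume "i \<in> V"
      then have i: "i < n" using V by blast
      have "lin ea (?E i) \<subseteq> {y. y < n \<and> h y \<le> h i \<and> g y = g i}" by (rule letters_E[OF el sm ea i])
      then show "lin ea (?E i) \<subseteq> {..<n}" by auto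
    qed
    finally show "lin_map ?E ea V \<subseteq> {..<n}" .
  qed
  have fin: "\<And>V. V \<subseteq> {..<n} \<Longrightarrow> finite V" using finite_subset finite_lessThan by metis
  have Einv: "\<And>x. eval ?E (?E x) = {[x]}" by (rule E_inv[OF fu uj])
  have inv1: "\<And>V. finite V \<Longrightarrow> lin_map ?E ?e1 (lin_map ?E e V) = V"
  proof -
    fix V :: "nat set" assume "finite V"
    show "lin_map ?E ?e1 (lin_map ?E e V) = V"
      apply (rule inv_generic)
         apply (rule Efin)
        apply (rule Einv)
       apply (rule einv[symmetric])
      apply (rule \<open>finite V\<close>)
      done
  qed
  have inv2: "\<And>V. finite V \<Longrightarrow> lin_map ?E e (lin_map ?E ?e1 V) = V"
  proof -
    fix V :: "nat set" assume "finite V"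
    show "lin_map ?E e (lin_map ?E ?e1 V) = V"
      apply (rule inv_generic)
         apply (rule Efin)
        apply (rule Einv)
       apply (rule refl)
      apply (rule \<open>finite V\<close>)
      done
  qed
  have gp: "good_pair n g h d e ?e1 (lin_map ?E e) (lin_map ?E ?e1)"
    unfolding good_pair_def
  proof (intro conjI allI impI)
    fix V assume V: "V \<subseteq> {..<n}"
    show "lin_map ?E e V \<subseteq> {..<n}" by (rule sub[OF okb V])
    show "lin_map ?E ?e1 V \<subseteq> {..<n}" by (rule sub[OF ok1b V])
  next
    fix V W assume V: "V \<subseteq> {..<n}" and W: "W \<subseteq> {..<n}"
    show "lin_map ?E e (zadd V W) = zadd (lin_map ?E e V) (lin_map ?E e W)"
      using fin[OF V] fin[OF W] by (rule lin_map_zadd)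
    show "lin_map ?E ?e1 (zadd V W) = zadd (lin_map ?E ?e1 V) (lin_map ?E ?e1 W)"
      using fin[OF V] fin[OF W] by (rule lin_map_zadd)
  next
    fix V t k assume V: "V \<in> filt n h t" "homog g k V"
    have s1: "lin_map ?E e V \<in> filt n h t \<and> homog g k (lin_map ?E e V)"
      by (rule step_filt[OF el sm okb V])
    have s2: "lin_map ?E ?e1 V \<in> filt n h t \<and> homog g k (lin_map ?E ?e1 V)"
      by (rule step_filt[OF el sm ok1b V])
    show "lin_map ?E e V \<in> filt n h t" using s1 by (rule conjunct1)
    show "homog g k (lin_map ?E e V)" using s1 by (rule conjunct2)
    show "lin_map ?E ?e1 V \<in> filt n h t" using s2 by (rule conjunct1)
    show "homog g k (lin_map ?E ?e1 V)" using s2 by (rule conjunct2)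
  next
    fix V assume V: "V \<subseteq> {..<n}"
    show "lin_map ?E e (lin_diff d ?e1 V) = lin_diff d e (lin_map ?E e V)"
      by (rule chain_generic[where f="?E" and ea=e and eb="?e1", OF Efin Ech Elet dfin oka refl V])
    show "lin_map ?E ?e1 (lin_diff d e V) = lin_diff d ?e1 (lin_map ?E ?e1 V)"
      by (rule chain_generic[where f="?E" and ea="?e1" and eb=e, OF Efin Ech Elet dfin ok1a einv[symmetric] V])
  next
    fix V assume V: "V \<subseteq> {..<n}"
    show "lin_map ?E ?e1 (lin_map ?E e V) = V"
      by (rule inv1[OF fin[OF V]])
    show "lin_map ?E e (lin_map ?E ?e1 V) = V"
      by (rule inv2[OF fin[OF V]])
  qed
  show ?thesis by (rule conjI[OF oke gp])
qed




primrec Fr :: "(nat \<times> elt) list \<Rightarrow> (nat \<Rightarrow> bool) \<Rightarrow> nat set \<Rightarrow> nat set" where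
  "Fr [] e = id"
| "Fr (p # fs) e = lin_map (elem_map (fst p) (snd p)) e \<circ> Fr fs (\<lambda>x. aug e (elem_map (fst p) (snd p) x))"

primrec Pr :: "(nat \<times> elt) list \<Rightarrow> (nat \<Rightarrow> bool) \<Rightarrow> nat set \<Rightarrow> nat set" where
  "Pr [] e = id"
| "Pr (p # fs) e = Pr fs (\<lambda>x. aug e (elem_map (fst p) (snd p) x)) \<circ>
     lin_map (elem_map (fst p) (snd p)) (\<lambda>x. aug e (elem_map (fst p) (snd p) x))"

lemma compose_Nil: "compose_elem [] = gen"
  by (simp add: compose_elem_def)

lemma compose_Cons: "compose_elem (p # fs) = comp (elem_map (fst p) (snd p)) (compose_elem fs)"
  by (cases p) (simp add: compose_elem_def)

lemma compose_fin: "(\<And>p. p \<in> set fs \<Longrightarrow> finite (snd p)) \<Longrightarrow> finite (compose_elem fs x)"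
proof (induction fs arbitrary: x)
  case Nil
  then show ?case by (simp add: compose_Nil gen_def)
next
  case (Cons p fs)
  then show ?case
    by (simp add: compose_Cons Defs.comp_def finite_eval E_fin)
qed

lemma compose_high: "(\<And>p. p \<in> set fs \<Longrightarrow> finite (snd p) \<and> fst p \<noteq> x) \<Longrightarrow> compose_elem fs x = {[x]}"
proof (induction fs)
  case Nil
  then show ?case by (simp add: compose_Nil gen_def)
next
  case (Cons p fs)
  then have "compose_elem fs x = {[x]}" by simp
  moreover have "finite (snd p)" "fst p \<noteq> x" using Cons.prems by auto
  ultimately show ?case
    by (simp add: compose_Cons Defs.comp_def eval_single E_fin E_other)
qed

lemma aug_compose_Cons: "(\<And>q. q \<in> set (p # fs) \<Longrightarrow> finite (snd q)) \<Longrightarrow>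
  (\<lambda>x. aug e (compose_elem (p # fs) x)) =
  (\<lambda>x. aug (\<lambda>y. aug e (elem_map (fst p) (snd p) y)) (compose_elem fs x))"
proof
  fix x
  assume F: "\<And>q. q \<in> set (p # fs) \<Longrightarrow> finite (snd q)"
  have "finite (compose_elem fs x)" using F by (intro compose_fin) auto
  moreover have "\<And>y. finite (elem_map (fst p) (snd p) y)" using F by (intro E_fin) auto
  ultimately show "aug e (compose_elem (p # fs) x) = aug (\<lambda>y. aug e (elem_map (fst p) (snd p) y)) (compose_elem fs x)"
    by (simp add: compose_Cons Defs.comp_def aug_eval)
qed

lemma lin_map_gen: "lin_map gen e V = V"
  by (simp add: lin_map_def linext_def gen_def zsum_id)

lemma R1: "(\<And>p. p \<in> set fs \<Longrightarrow> finite (snd p)) \<Longrightarrow> finite V \<Longrightarrow> lin_map (compose_elem fs) e V = Fr fs e V"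
proof (induction fs arbitrary: e V)
  case Nil
  then show ?case by (simp add: compose_Nil lin_map_gen)
next
  case (Cons p fs)
  let ?E = "elem_map (fst p) (snd p)"
  let ?e1 = "\<lambda>x. aug e (?E x)"
  let ?P = "compose_elem fs"
  have Efin: "\<And>x. finite (?E x)" using Cons.prems by (intro E_fin) auto
  have Pfin: "\<And>x. finite (?P x)" using Cons.prems by (intro compose_fin) auto
  have "lin_map (compose_elem (p # fs)) e V = zsum V (\<lambda>i. lin e (eval ?E (?P i)))"
    by (simp add: lin_map_def linext_def compose_Cons Defs.comp_def)
  also have "\<dots> = zsum V (\<lambda>i. zsum (lin ?e1 (?P i)) (\<lambda>x. lin e (?E x)))"
    by (intro zsum_cong lin_eval Pfin Efin)
  also have "\<dots> = zsum (zsum V (\<lambda>i. lin ?e1 (?P i))) (\<lambda>x. lin e (?E x))"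
    using Cons.prems Pfin by (intro zsum_fubini[symmetric]) auto
  also have "\<dots> = lin_map ?E e (lin_map ?P ?e1 V)"
    by (simp add: lin_map_def linext_def)
  also have "\<dots> = lin_map ?E e (Fr fs ?e1 V)"
    using Cons by simp
  finally show ?case by simp
qed

lemma main_ind:
  assumes dfin: "\<And>i. i < n \<Longrightarrow> finite (d i)"
  shows "(\<And>p. p \<in> set fs \<Longrightarrow> elem_aut n g d (fst p) (snd p) \<and> semimonotonic h (fst p) (snd p)) \<Longrightarrow>
    aug_ok n g d (\<lambda>x. aug e (compose_elem fs x)) \<Longrightarrow>
    aug_ok n g d e \<and> good_pair n g h d e (\<lambda>x. aug e (compose_elem fs x)) (Fr fs e) (Pr fs e)"
proof (induction fs arbitrary: e)
  case Nil
  have eq: "(\<lambda>x. aug e (compose_elem [] x)) = e" by (simp add: compose_Nil gen_def)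
  show ?case using Nil.prems(2) good_id by (simp only: eq Fr.simps Pr.simps)
next
  case (Cons p fs)
  let ?E = "elem_map (fst p) (snd p)"
  let ?e1 = "\<lambda>x. aug e (?E x)"
  have el: "elem_aut n g d (fst p) (snd p)" "semimonotonic h (fst p) (snd p)" using Cons.prems(1) by auto
  have fins: "\<And>q. q \<in> set (p # fs) \<Longrightarrow> finite (snd q)"
    using Cons.prems(1) unfolding elem_aut_def by blast
  have eq: "(\<lambda>x. aug e (compose_elem (p # fs) x)) = (\<lambda>x. aug ?e1 (compose_elem fs x))"
    by (rule aug_compose_Cons[OF fins])
  have IH: "aug_ok n g d ?e1 \<and> good_pair n g h d ?e1 (\<lambda>x. aug ?e1 (compose_elem fs x)) (Fr fs ?e1) (Pr fs ?e1)"
    using Cons.IH[of ?e1] Cons.prems eq by simp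
  have st: "aug_ok n g d e \<and> good_pair n g h d e ?e1 (lin_map ?E e) (lin_map ?E ?e1)"
    using step_lemma[OF dfin el(1) el(2)] IH by blast
  have gp: "good_pair n g h d e (\<lambda>x. aug ?e1 (compose_elem fs x)) (lin_map ?E e \<circ> Fr fs ?e1) (Pr fs ?e1 \<circ> lin_map ?E ?e1)"
    using good_comp st IH by blast
  show ?case unfolding eq Fr.simps Pr.simps using st gp by blast
qed




lemma card_zadd_odd: "finite A \<Longrightarrow> finite B \<Longrightarrow> odd (card (zadd A B)) = (odd (card A) \<noteq> odd (card B))"
proof -
  assume F: "finite A" "finite B"
  have c: "\<And>S. finite S \<Longrightarrow> bt (odd (card S)) = (\<Sum>x\<in>S. bt True)"
  proof -
    fix S assume "finite S"
    then have "(\<Sum>x\<in>S. bt True) = bt (odd (card {x\<in>S. True}))" by (rule sum_bt_card)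
    then show "bt (odd (card S)) = (\<Sum>x\<in>S. bt True)" by simp
  qed
  have "bt (odd (card (zadd A B))) = bt (odd (card A)) + bt (odd (card B))"
    using F by (simp only: c finite_zadd sum_zadd_bit)
  also have "\<dots> = bt (odd (card A) \<noteq> odd (card B))" by (simp only: bt_xor)
  finally show ?thesis by (simp only: of_bool_eq_iff)
qed

lemma zsum_zadd_fib:
  assumes K: "\<And>y. finite {i. y \<in> f i}"
  shows "zsum (zadd V W) f = zadd (zsum V f) (zsum W f)"
proof (rule set_eqI)
  fix y
  let ?K = "{i. y \<in> f i}"
  have m: "\<And>S. (y \<in> zsum S f) = odd (card (S \<inter> ?K))"
    unfolding zsum_def by (simp add: Int_def)
  have "zadd V W \<inter> ?K = zadd (V \<inter> ?K) (W \<inter> ?K)" by (auto simp: zadd_def)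
  have "odd (card (zadd V W \<inter> ?K)) = (odd (card (V \<inter> ?K)) \<noteq> odd (card (W \<inter> ?K)))"
  proof -
    have fV: "finite (V \<inter> ?K)" "finite (W \<inter> ?K)" using K[of y] by auto
    show ?thesis using \<open>zadd V W \<inter> ?K = _\<close> by (simp only: card_zadd_odd[OF fV])
  qed
  then show "y \<in> zsum (zadd V W) f \<longleftrightarrow> y \<in> zadd (zsum V f) (zsum W f)"
    by (simp only: m mem_zadd)
qed




theorem proposition4p4:
  fixes n :: nat
    and g g' :: "nat \<Rightarrow> int"
    and h h' :: "nat \<Rightarrow> real"
    and d d' :: "nat \<Rightarrow> elt"
    and fs :: "(nat \<times> elt) list"
    and e e' :: "nat \<Rightarrow> bool"
    and \<delta> :: real
  assumes A: "filtered_ce_dga n g h d"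
    and A': "filtered_ce_dga n g' h' d'"
    and elem: "\<forall>(j, u) \<in> set fs. elem_aut n g d j u \<and> semimonotonic h j u"
    and sigma: "dga_map n g d g' d' gen"
    and delta: "\<forall>i<n. \<bar>h' i - h i\<bar> \<le> \<delta>"
    and eps: "augmentation n g d e"
    and eps': "\<forall>i<n. aug e' (comp gen (compose_elem fs) i) = e i"
  shows "induces_interleaving n g h (lin_diff d e) g' h' (lin_diff d' e') \<delta>
           (lin_map (comp gen (compose_elem fs)) e')"
proof -
  have dfin: "\<And>i. i < n \<Longrightarrow> finite (d i)" and dlet: "\<And>i w. i < n \<Longrightarrow> w \<in> d i \<Longrightarrow> set w \<subseteq> {..<n}"
    using A unfolding filtered_ce_dga_def by blast+
  have d'fin: "\<And>i. i < n \<Longrightarrow> finite (d' i)"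
    using A' unfolding filtered_ce_dga_def by blast
  have elem': "\<And>p. p \<in> set fs \<Longrightarrow> elem_aut n g d (fst p) (snd p) \<and> semimonotonic h (fst p) (snd p)"
    using elem by auto
  have fins: "\<And>p. p \<in> set fs \<Longrightarrow> finite (snd p)" and fsn: "\<And>p. p \<in> set fs \<Longrightarrow> fst p < n"
    using elem' unfolding elem_aut_def by blast+
  have sig: "\<forall>i<n. finite (gen i) \<and> (\<forall>w\<in>gen i. set w \<subseteq> {..<n} \<and> wdeg g' w = g i) \<and>
        dext d' (gen i) = eval gen (d i)"
    using sigma unfolding dga_map_def .
  have gg: "\<And>i. i < n \<Longrightarrow> g' i = g i"
  proof -
    fix i assume "i < n"
    then have "wdeg g' [i] = g i" using sig by (simp add: gen_def)
    then show "g' i = g i" by (simp add: wdeg_def)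
  qed
  have evgen: "\<And>A. eval gen A = A" by (rule eval_id) (simp add: gen_def)
  have dd: "\<And>i. i < n \<Longrightarrow> d' i = d i"
  proof -
    fix i assume i: "i < n"
    have "dext d' (gen i) = d' i" using d'fin[OF i] by (simp add: gen_def dext_gen)
    then show "d' i = d i" using sig i evgen by simp
  qed
  let ?P = "compose_elem fs"
  have cgP: "comp gen ?P = ?P" by (rule ext) (simp add: Defs.comp_def evgen)
  have Pfin: "\<And>x. finite (?P x)" using fins by (rule compose_fin)
  let ?eK = "\<lambda>x. aug e' (?P x)"
  have eKe: "\<And>i. i < n \<Longrightarrow> ?eK i = e i" using eps' cgP by simp
  have epsa: "\<And>i. i < n \<Longrightarrow> \<not> aug e (d i)" and epsb: "\<And>i. i < n \<Longrightarrow> e i \<Longrightarrow> g i = 0"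
    using eps unfolding augmentation_def by blast+
  have augK: "\<And>i. i < n \<Longrightarrow> aug ?eK (d i) = aug e (d i)"
  proof -
    fix i assume i: "i < n"
    show "aug ?eK (d i) = aug e (d i)"
    proof (rule aug_cong)
      fix w x assume "w \<in> d i" "x \<in> set w"
      then have "x < n" using dlet[OF i] by blast
      then show "?eK x = e x" by (rule eKe)
    qed
  qed
  have okK: "aug_ok n g d ?eK"
    unfolding aug_ok_def using augK epsa eKe epsb by simp
  have MI: "aug_ok n g d e' \<and> good_pair n g h d e' ?eK (Fr fs e') (Pr fs e')"
    by (rule main_ind[OF dfin elem' okK])
  note gp = good_pairD[OF conjunct2[OF MI]]
  let ?F = "lin_map (comp gen ?P) e'"
  let ?D = "lin_diff d e"
  let ?D' = "lin_diff d' e'"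
  have fin: "\<And>V. V \<subseteq> {..<n} \<Longrightarrow> finite V" using finite_subset finite_lessThan by metis
  have Dfin: "\<And>W. W \<subseteq> {..<n} \<Longrightarrow> finite (?D W)"
  proof -
    fix W assume Wn: "W \<subseteq> {..<n}"
    show "finite (?D W)" unfolding lin_diff_def linext_def
    proof (rule finite_zsum)
      show "finite W" by (rule fin[OF Wn])
    next
      fix i assume "i \<in> W"
      then have "i < n" using Wn by blast
      then show "finite (lin e (d i))" using dfin by simp
    qed
  qed
  have FFr': "\<And>V. finite V \<Longrightarrow> ?F V = Fr fs e' V"
    using R1[OF fins] cgP by simp
  have FFr: "\<And>V. V \<subseteq> {..<n} \<Longrightarrow> ?F V = Fr fs e' V"
    using R1[OF fins fin] cgP by simp
  have DK: "\<And>V. V \<subseteq> {..<n} \<Longrightarrow> ?D V = lin_diff d ?eK V"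
  proof -
    fix V assume V: "V \<subseteq> {..<n}"
    show "?D V = lin_diff d ?eK V"
      unfolding lin_diff_def linext_def
    proof (rule zsum_cong)
      fix i assume "i \<in> V"
      then have i: "i < n" using V by blast
      show "lin e (d i) = lin ?eK (d i)"
        unfolding lin_def
      proof (rule zsum_cong)
        fix w assume "w \<in> d i"
        then have "set w \<subseteq> {..<n}" using dlet[OF i] by blast
        then show "lin_word e w = lin_word ?eK w" using eKe by (intro lin_word_cong) auto
      qed
    qed
  qed
  have D'e: "\<And>V. V \<subseteq> {..<n} \<Longrightarrow> ?D' V = lin_diff d e' V"
    unfolding lin_diff_def linext_def using dd by (intro zsum_cong) auto
  have filtsub: "\<And>V t. V \<in> filt n h t \<Longrightarrow> V \<subseteq> {..<n}" unfolding filt_def by auto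
  have filtsub': "\<And>V t. V \<in> filt n h' t \<Longrightarrow> V \<subseteq> {..<n}" unfolding filt_def by auto
  have fhh': "\<And>V t. V \<in> filt n h t \<Longrightarrow> V \<in> filt n h' (t + \<delta>)"
    unfolding filt_def using delta by fastforce
  have fh'h: "\<And>V t. V \<in> filt n h' t \<Longrightarrow> V \<in> filt n h (t + \<delta>)"
    unfolding filt_def using delta by fastforce
  have hom: "\<And>V k. V \<subseteq> {..<n} \<Longrightarrow> homog g' k V = homog g k V"
  proof -
    fix V k assume V: "V \<subseteq> {..<n}"
    then have "\<And>i. i \<in> V \<Longrightarrow> g' i = g i" using gg by blast
    then show "homog g' k V = homog g k V" unfolding homog_def by simp
  qed
  have D0: "\<And>D. lin_diff D e {} = {}" "\<And>D ee. lin_diff D ee {} = {}"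
    by (simp_all add: lin_diff_def linext_def)
  have bdy0: "\<And>D hh gg s k. {} \<in> bdy (lin_diff D e) n hh gg s k"
    unfolding bdy_def filt_def homog_def by (auto intro!: exI[of _ "{}"] simp: D0)
  have bdy0': "\<And>D hh gg s k. {} \<in> bdy (lin_diff D e') n hh gg s k"
    unfolding bdy_def filt_def homog_def by (auto intro!: exI[of _ "{}"] simp: lin_diff_def linext_def)
  have Fr0: "Fr fs e' {} = {}"
    using gp(3)[of "{}" "{}"] by simp
  have Pr0: "Pr fs e' {} = {}"
    using gp(4)[of "{}" "{}"] by simp
  have Fhigh: "\<And>i. n \<le> i \<Longrightarrow> ?P i = {[i]}"
  proof -
    fix i assume "n \<le> i"
    then show "?P i = {[i]}" using fins fsn by (intro compose_high) fastforce
  qed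
  have Flin: "\<And>V W. ?F (zadd V W) = zadd (?F V) (?F W)"
    unfolding lin_map_def linext_def
  proof (rule zsum_zadd_fib)
    fix y
    have "{i. y \<in> lin e' (comp gen ?P i)} \<subseteq> {..<n} \<union> {y}"
    proof
      fix i assume i: "i \<in> {i. y \<in> lin e' (comp gen ?P i)}"
      show "i \<in> {..<n} \<union> {y}"
      proof (cases "i < n")
        case False
        then have "comp gen ?P i = {[i]}" using Fhigh cgP by simp
        then show ?thesis using i by simp
      qed simp
    qed
    then show "finite {i. y \<in> lin e' (comp gen ?P i)}" by (rule finite_subset) simp
  qed
  show ?thesis
    unfolding induces_interleaving_def
  proof (intro conjI allI ballI)
    show "\<And>V W. ?F (zadd V W) = zadd (?F V) (?F W)" by (rule Flin)
  next
    fix t k z assume z: "z \<in> cyc ?D n h g t k"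
    then have zf: "z \<in> filt n h t" "homog g k z" "?D z = {}" unfolding cyc_def by auto
    have zn: "z \<subseteq> {..<n}" using filtsub zf(1) by blast
    have "?F z = Fr fs e' z" using FFr zn by blast
    moreover have "Fr fs e' z \<in> filt n h t" "homog g k (Fr fs e' z)" using gp(5,6) zf by blast+
    moreover have "?D' (Fr fs e' z) = {}"
    proof -
      have "?D' (Fr fs e' z) = lin_diff d e' (Fr fs e' z)" using D'e gp(1) zn by blast
      also have "\<dots> = Fr fs e' (lin_diff d ?eK z)" using gp(9) zn by simp
      also have "\<dots> = {}" using DK zn zf(3) Fr0 by simp
      finally show ?thesis .
    qed
    ultimately show "?F z \<in> cyc ?D' n h' g' (t + \<delta>) k"
      unfolding cyc_def using fhh' hom filtsub by auto
  next
    fix t k z assume z: "z \<in> bdy ?D n h g t k"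
    then have "\<exists>W. z = ?D W \<and> W \<in> filt n h t \<and> homog g (k + 1) W" unfolding bdy_def by blast
    then obtain W where W: "z = ?D W" "W \<in> filt n h t" "homog g (k + 1) W" by blast
    have Wn: "W \<subseteq> {..<n}" using filtsub W(2) by blast
    have zn: "finite z" unfolding W(1) by (rule Dfin[OF Wn])
    have "?F z = Fr fs e' (?D W)" using FFr'[OF zn] W(1) by simp
    also have "\<dots> = Fr fs e' (lin_diff d ?eK W)" using DK[OF Wn] by simp
    also have "\<dots> = lin_diff d e' (Fr fs e' W)" using gp(9)[OF Wn] by simp
    also have "\<dots> = ?D' (Fr fs e' W)" using D'e[OF gp(1)[OF Wn]] by simp
    finally have Fz: "?F z = ?D' (Fr fs e' W)" .
    have f1: "Fr fs e' W \<in> filt n h' (t + \<delta>)" using fhh'[OF gp(5)[OF W(2) W(3)]] .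
    have f2: "homog g' (k + 1) (Fr fs e' W)"
      using gp(6)[OF W(2) W(3)] hom[OF gp(1)[OF Wn]] by simp
    show "?F z \<in> bdy ?D' n h' g' (t + \<delta>) k"
      unfolding bdy_def using Fz f1 f2 by blast
  next
    show "\<exists>\<Psi>. (\<forall>t k. \<forall>z\<in>cyc ?D' n h' g' t k. \<Psi> t z \<in> cyc ?D n h g (t + \<delta>) k) \<and>
        (\<forall>t k. \<forall>z\<in>cyc ?D' n h' g' t k. \<forall>w\<in>cyc ?D' n h' g' t k.
            \<Psi> t (zadd z w) = zadd (\<Psi> t z) (\<Psi> t w)) \<and>
        (\<forall>t k. \<forall>z\<in>bdy ?D' n h' g' t k. \<Psi> t z \<in> bdy ?D n h g (t + \<delta>) k) \<and>
        (\<forall>t s k. t \<le> s \<longrightarrow> (\<forall>z\<in>cyc ?D' n h' g' t k.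
            zadd (\<Psi> s z) (\<Psi> t z) \<in> bdy ?D n h g (s + \<delta>) k)) \<and>
        (\<forall>t k. \<forall>z\<in>cyc ?D n h g t k.
            zadd (\<Psi> (t + \<delta>) (?F z)) z \<in> bdy ?D n h g (t + 2 * \<delta>) k) \<and>
        (\<forall>t k. \<forall>z\<in>cyc ?D' n h' g' t k.
            zadd (?F (\<Psi> t z)) z \<in> bdy ?D' n h' g' (t + 2 * \<delta>) k)"
    proof (rule exI[of _ "\<lambda>t. Pr fs e'"], intro conjI allI ballI impI)
      fix t k z assume z: "z \<in> cyc ?D' n h' g' t k"
      then have zf: "z \<in> filt n h' t" "homog g' k z" "?D' z = {}" unfolding cyc_def by blast+
      have zn: "z \<subseteq> {..<n}" using filtsub' zf(1) by blast
      have zh1: "z \<in> filt n h (t + \<delta>)" by (rule fh'h[OF zf(1)])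
      have zh2: "homog g k z" using zf(2) hom[OF zn] by simp
      have p1: "Pr fs e' z \<in> filt n h (t + \<delta>)" by (rule gp(7)[OF zh1 zh2])
      have p2: "homog g k (Pr fs e' z)" by (rule gp(8)[OF zh1 zh2])
      have "?D (Pr fs e' z) = lin_diff d ?eK (Pr fs e' z)" by (rule DK[OF gp(2)[OF zn]])
      also have "\<dots> = Pr fs e' (lin_diff d e' z)" using gp(10)[OF zn] by simp
      also have "\<dots> = {}" using D'e[OF zn] zf(3) Pr0 by simp
      finally have p3: "?D (Pr fs e' z) = {}" .
      show "Pr fs e' z \<in> cyc ?D n h g (t + \<delta>) k" unfolding cyc_def using p1 p2 p3 by blast
    next
      fix t k z w assume z: "z \<in> cyc ?D' n h' g' t k" and w: "w \<in> cyc ?D' n h' g' t k"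
      have zn: "z \<subseteq> {..<n}" using z filtsub' unfolding cyc_def by blast
      have wn: "w \<subseteq> {..<n}" using w filtsub' unfolding cyc_def by blast
      show "Pr fs e' (zadd z w) = zadd (Pr fs e' z) (Pr fs e' w)" by (rule gp(4)[OF zn wn])
    next
      fix t k z assume z: "z \<in> bdy ?D' n h' g' t k"
      then have "\<exists>W. z = ?D' W \<and> W \<in> filt n h' t \<and> homog g' (k + 1) W" unfolding bdy_def by blast
      then obtain W where W: "z = ?D' W" "W \<in> filt n h' t" "homog g' (k + 1) W" by blast
      have Wn: "W \<subseteq> {..<n}" using filtsub' W(2) by blast
      have "Pr fs e' z = Pr fs e' (lin_diff d e' W)" using W(1) D'e[OF Wn] by simp
      also have "\<dots> = lin_diff d ?eK (Pr fs e' W)" using gp(10)[OF Wn] by simp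
      also have "\<dots> = ?D (Pr fs e' W)" using DK[OF gp(2)[OF Wn]] by simp
      finally have Pz: "Pr fs e' z = ?D (Pr fs e' W)" .
      have Wh1: "W \<in> filt n h (t + \<delta>)" by (rule fh'h[OF W(2)])
      have Wh2: "homog g (k + 1) W" using W(3) hom[OF Wn] by simp
      have f1: "Pr fs e' W \<in> filt n h (t + \<delta>)" by (rule gp(7)[OF Wh1 Wh2])
      have f2: "homog g (k + 1) (Pr fs e' W)" by (rule gp(8)[OF Wh1 Wh2])
      show "Pr fs e' z \<in> bdy ?D n h g (t + \<delta>) k"
        unfolding bdy_def using Pz f1 f2 by blast
    next
      fix t s k z
      show "zadd (Pr fs e' z) (Pr fs e' z) \<in> bdy ?D n h g (s + \<delta>) k"
        using bdy0 by (simp only: zadd_empty)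
    next
      fix t k z assume z: "z \<in> cyc ?D n h g t k"
      then have zn: "z \<subseteq> {..<n}" using filtsub unfolding cyc_def by blast
      have "Pr fs e' (?F z) = z" using FFr[OF zn] gp(11)[OF zn] by simp
      then show "zadd (Pr fs e' (?F z)) z \<in> bdy ?D n h g (t + 2 * \<delta>) k"
        using bdy0 by (simp only: zadd_empty)
    next
      fix t k z assume z: "z \<in> cyc ?D' n h' g' t k"
      then have zn: "z \<subseteq> {..<n}" using filtsub' unfolding cyc_def by blast
      have "?F (Pr fs e' z) = z" using FFr[OF gp(2)[OF zn]] gp(12)[OF zn] by simp
      then show "zadd (?F (Pr fs e' z)) z \<in> bdy ?D' n h' g' (t + 2 * \<delta>) k"
        using bdy0' by (simp only: zadd_empty)
    qed
  qed
qed


end
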